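(* Let $X_1,\dots,X_n$ be independent real-valued integrable random variables and define constants $\lambda_0=0$, $\lambda_k=\mathbb E\sqrt{X_k^2+\lambda_{k-1}^2}$ for $k=1,\dots,n$. Then $$\lambda_n\le\mathbb E\Big(\sum_{k=1}^nX_k^2\Big)^{1/2}\le2\lambda_n .$$ *)

theory Defs
  imports "HOL-Probability.Probability"
begin

fun lam :: "'a measure \<Rightarrow> (nat \<Rightarrow> 'a \<Rightarrow> real) \<Rightarrow> nat \<Rightarrow> real" where
  "lam M X 0 = 0"
| "lam M X (Suc k) = (\<integral>\<omega>. sqrt ((X (Suc k) \<omega>)\<^sup>2 + (lam M X k)\<^sup>2) \<partial>M)"

end

theory Submission
  imports Defs
begin

lemma sqrt_lip:
  fixes x t l :: real
  assumes "0 \<le> t" "0 \<le> l"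
  shows "sqrt (x^2 + t^2) \<le> sqrt (x^2 + l^2) + max 0 (t - l)"
proof (cases "t \<le> l")
  case True
  then have "t^2 \<le> l^2" using assms by (simp add: power_mono)
  then show ?thesis using True by (simp add: real_sqrt_le_mono)
next
  case False
  define sv where "sv = sqrt (x^2 + l^2)"
  have s2: "sv^2 = x^2 + l^2" unfolding sv_def by simp
  have sl: "l \<le> sv" unfolding sv_def using assms by (simp add: real_le_rsqrt)
  have "sqrt (x^2 + t^2) \<le> sv + (t - l)"
  proof (rule real_le_lsqrt)
    show "0 \<le> sv + (t - l)" using False sl assms by simp
    have e1: "(sv + (t - l))^2 = sv^2 + 2 * sv * (t-l) + (t-l)^2" by (simp add: power2_eq_square algebra_simps)
    have e2: "2 * sv * (t-l) \<ge> 2 * l * (t-l)" using sl False by (simp add: mult_right_mono)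
    have e3: "x^2 + l^2 + 2 * l * (t-l) + (t-l)^2 = x^2 + t^2" by (simp add: power2_eq_square algebra_simps)
    show "x^2 + t^2 \<le> (sv + (t - l))^2" using e1 e2 e3 s2 by linarith
  qed
  then show ?thesis using False unfolding sv_def by simp
qed

lemma sqrt_convex:
  fixes x t m :: real
  shows "sqrt (x^2 + m^2) + m / sqrt (x^2 + m^2) * (t - m) \<le> sqrt (x^2 + t^2)"
proof (cases "x^2 + m^2 = 0")
  case True
  then have "m = 0" by (simp add: sum_power2_eq_zero_iff)
  then show ?thesis by simp
next
  case False
  define sv where "sv = sqrt (x^2 + m^2)"
  have sp: "sv > 0" unfolding sv_def using False
    by (metis add_nonneg_nonneg real_sqrt_gt_0_iff order_le_neq_trans zero_le_power2)
  have s2: "sv^2 = x^2 + m^2" unfolding sv_def by simp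
  have "x^2 + m*t \<le> sv * sqrt (x^2 + t^2)"
  proof -
    have "(x^2 + m*t)^2 \<le> (x^2+m^2)*(x^2+t^2)"
    proof -
      have "0 \<le> x^2 * (m - t)^2" by simp
      then show ?thesis by (simp add: power2_eq_square algebra_simps)
    qed
    then have "x^2 + m*t \<le> sqrt ((x^2+m^2)*(x^2+t^2))" by (rule real_le_rsqrt)
    then show ?thesis unfolding sv_def by (simp add: real_sqrt_mult)
  qed
  then have "(x^2 + m*t) / sv \<le> sqrt (x^2 + t^2)" using sp by (simp add: divide_le_eq mult.commute)
  moreover have "(x^2 + m*t) / sv = sv + m / sv * (t - m)"
    using sp s2 by (simp add: field_simps power2_eq_square)
  ultimately show ?thesis unfolding sv_def by simp
qed


context prob_space
begin

lemma int_sqrt_const: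
  assumes "integrable M f"
  shows "integrable M (\<lambda>\<omega>. sqrt ((f \<omega>)^2 + c^2))"
proof (rule Bochner_Integration.integrable_bound[where f="\<lambda>\<omega>. \<bar>f \<omega>\<bar> + \<bar>c\<bar>"])
  show "integrable M (\<lambda>\<omega>. \<bar>f \<omega>\<bar> + \<bar>c\<bar>)" using assms by simp
  show "(\<lambda>\<omega>. sqrt ((f \<omega>)^2 + c^2)) \<in> borel_measurable M"
    using borel_measurable_integrable[OF assms] by measurable
  have "sqrt ((f \<omega>)^2 + c^2) \<le> \<bar>f \<omega>\<bar> + \<bar>c\<bar>" for \<omega>
  proof (rule real_le_lsqrt)
    show "0 \<le> \<bar>f \<omega>\<bar> + \<bar>c\<bar>" by simp
    have "(\<bar>f \<omega>\<bar> + \<bar>c\<bar>)^2 = (f \<omega>)^2 + c^2 + 2 * \<bar>f \<omega>\<bar> * \<bar>c\<bar>"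
      by (simp add: power2_eq_square algebra_simps)
    then show "(f \<omega>)^2 + c^2 \<le> (\<bar>f \<omega>\<bar> + \<bar>c\<bar>)^2" by simp
  qed
  then show "AE \<omega> in M. norm (sqrt ((f \<omega>)^2 + c^2)) \<le> norm (\<bar>f \<omega>\<bar> + \<bar>c\<bar>)"
    by auto
qed

lemma lam_nonneg: "0 \<le> lam M X m"
  by (cases m) (auto intro!: integral_nonneg_AE)

lemma lam_mono:
  assumes "integrable M (X (Suc m))"
  shows "lam M X m \<le> lam M X (Suc m)"
proof -
  have "lam M X m = (\<integral>\<omega>. lam M X m \<partial>M)" by (simp add: prob_space)
  also have "\<dots> \<le> lam M X (Suc m)"
    unfolding lam.simps
    by (rule integral_mono[OF _ int_sqrt_const[OF assms]]) (auto intro: real_le_rsqrt)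
  finally show ?thesis .
qed

lemma Y_int:
  assumes "\<And>k. k \<in> {1..m} \<Longrightarrow> integrable M (X k)"
  shows "integrable M (\<lambda>\<omega>. sqrt (\<Sum>k=1..m. (X k \<omega>)^2))"
proof (rule Bochner_Integration.integrable_bound[where f="\<lambda>\<omega>. \<Sum>k=1..m. \<bar>X k \<omega>\<bar>"])
  show "integrable M (\<lambda>\<omega>. \<Sum>k=1..m. \<bar>X k \<omega>\<bar>)" using assms by auto
  have [measurable]: "k \<in> {1..m} \<Longrightarrow> X k \<in> borel_measurable M" for k
    using assms borel_measurable_integrable by blast
  show "(\<lambda>\<omega>. sqrt (\<Sum>k=1..m. (X k \<omega>)^2)) \<in> borel_measurable M"
    by measurable
  have "sqrt (\<Sum>k=1..m. (X k \<omega>)^2) \<le> (\<Sum>k=1..m. \<bar>X k \<omega>\<bar>)" for \<omega>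
    using L2_set_le_sum_abs[of "\<lambda>k. X k \<omega>" "{1..m}"] by (simp add: L2_set_def)
  then show "AE \<omega> in M. norm (sqrt (\<Sum>k=1..m. (X k \<omega>)^2)) \<le> norm (\<Sum>k=1..m. \<bar>X k \<omega>\<bar>)"
    by (intro AE_I2) (simp add: sum_nonneg)
qed

lemma Y_rec: "sqrt (\<Sum>k=1..Suc m. (X k \<omega>)^2) = sqrt ((X (Suc m) \<omega>)^2 + (sqrt (\<Sum>k=1..m. (X k \<omega>)^2))^2)"
  by (simp add: sum_nonneg add.commute)

lemma upper_aux:
  assumes int: "\<And>k. k \<in> {1..n} \<Longrightarrow> integrable M (X k)"
  shows "m \<le> n \<Longrightarrow> (\<integral>\<omega>. max 0 (sqrt (\<Sum>k=1..m. (X k \<omega>)^2) - lam M X m) \<partial>M) \<le> lam M X m"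
proof (induction m)
  case 0
  then show ?case by simp
next
  case (Suc m)
  define l where "l = lam M X m"
  define L where "L = lam M X (Suc m)"
  define Y where "Y = (\<lambda>\<omega>. sqrt (\<Sum>k=1..m. (X k \<omega>)^2))"
  define Z where "Z = (\<lambda>\<omega>. sqrt ((X (Suc m) \<omega>)^2 + l^2))"
  have intX: "integrable M (X (Suc m))" using int Suc.prems by simp
  have intY: "integrable M Y" unfolding Y_def by (rule Y_int) (use int Suc.prems in auto)
  have intZ: "integrable M Z" unfolding Z_def by (rule int_sqrt_const[OF intX])
  have l0: "0 \<le> l" unfolding l_def by (rule lam_nonneg)
  have lL: "l \<le> L" unfolding l_def L_def by (rule lam_mono[where X=X, OF intX])
  have LZ: "L = (\<integral>\<omega>. Z \<omega> \<partial>M)" unfolding L_def Z_def l_def by simp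
  have IH: "(\<integral>\<omega>. max 0 (Y \<omega> - l) \<partial>M) \<le> l" unfolding Y_def l_def using Suc by simp
  have pw: "max 0 (sqrt (\<Sum>k=1..Suc m. (X k \<omega>)^2) - L) \<le> Z \<omega> - l + max 0 (Y \<omega> - l)" for \<omega>
  proof -
    have Y0: "0 \<le> Y \<omega>" unfolding Y_def by (simp add: sum_nonneg)
    have "sqrt (\<Sum>k=1..Suc m. (X k \<omega>)^2) = sqrt ((X (Suc m) \<omega>)^2 + (Y \<omega>)^2)"
      unfolding Y_def by (rule Y_rec)
    also have "\<dots> \<le> Z \<omega> + max 0 (Y \<omega> - l)" unfolding Z_def by (rule sqrt_lip[OF Y0 l0])
    finally have a: "sqrt (\<Sum>k=1..Suc m. (X k \<omega>)^2) \<le> Z \<omega> + max 0 (Y \<omega> - l)" .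
    have "l \<le> Z \<omega>" unfolding Z_def by (simp add: real_le_rsqrt)
    then show ?thesis using a lL by simp
  qed
  have "(\<integral>\<omega>. max 0 (sqrt (\<Sum>k=1..Suc m. (X k \<omega>)^2) - L) \<partial>M)
      \<le> (\<integral>\<omega>. Z \<omega> - l + max 0 (Y \<omega> - l) \<partial>M)"
  proof (rule integral_mono)
    show "integrable M (\<lambda>\<omega>. max 0 (sqrt (\<Sum>k=1..Suc m. (X k \<omega>)^2) - L))"
    proof -
      have iY2: "integrable M (\<lambda>\<omega>. sqrt (\<Sum>k=1..Suc m. (X k \<omega>)^2))"
        by (rule Y_int) (use int Suc.prems in auto)
      show ?thesis by (intro integrable_max integrable_zero Bochner_Integration.integrable_diff[OF iY2]) simp
    qed
    show "integrable M (\<lambda>\<omega>. Z \<omega> - l + max 0 (Y \<omega> - l))"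
      by (intro integrable_max integrable_zero Bochner_Integration.integrable_diff Bochner_Integration.integrable_add intY intZ) simp_all
  qed (rule pw)
  also have "\<dots> = L - l + (\<integral>\<omega>. max 0 (Y \<omega> - l) \<partial>M)"
    using intY intZ by (simp add: LZ prob_space)
  also have "\<dots> \<le> L" using IH by simp
  finally show ?case unfolding L_def .
qed

lemma lower_aux:
  assumes ind: "indep_vars (\<lambda>_. borel) X {1..n}"
    and int: "\<And>k. k \<in> {1..n} \<Longrightarrow> integrable M (X k)"
  shows "m \<le> n \<Longrightarrow> lam M X m \<le> (\<integral>\<omega>. sqrt (\<Sum>k=1..m. (X k \<omega>)^2) \<partial>M)"
proof (induction m)
  case 0
  then show ?case by simp
next
  case (Suc m)
  define l where "l = lam M X m"
  define Y where "Y = (\<lambda>\<omega>. sqrt (\<Sum>k=1..m. (X k \<omega>)^2))"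
  define \<mu> where "\<mu> = (\<integral>\<omega>. Y \<omega> \<partial>M)"
  define c where "c = (\<lambda>\<omega>. \<mu> / sqrt ((X (Suc m) \<omega>)^2 + \<mu>^2))"
  have intX: "integrable M (X (Suc m))" using int Suc.prems by simp
  have [measurable]: "X (Suc m) \<in> borel_measurable M" using intX by (rule borel_measurable_integrable)
  have intY: "integrable M Y" unfolding Y_def by (rule Y_int) (use int Suc.prems in auto)
  have iY2: "integrable M (\<lambda>\<omega>. sqrt (\<Sum>k=1..Suc m. (X k \<omega>)^2))"
    by (rule Y_int) (use int Suc.prems in auto)
  have l0: "0 \<le> l" unfolding l_def by (rule lam_nonneg)
  have IH: "l \<le> \<mu>" unfolding l_def \<mu>_def Y_def using Suc by simp
  have \<mu>0: "0 \<le> \<mu>" using l0 IH by simp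
  have cb: "\<bar>c \<omega>\<bar> \<le> 1" for \<omega>
  proof (cases "(X (Suc m) \<omega>)^2 + \<mu>^2 = 0")
    case True then show ?thesis unfolding c_def by simp
  next
    case False
    have "\<mu> \<le> sqrt ((X (Suc m) \<omega>)^2 + \<mu>^2)" by (simp add: real_le_rsqrt)
    moreover have "0 < sqrt ((X (Suc m) \<omega>)^2 + \<mu>^2)" using False
      by (metis add_nonneg_nonneg real_sqrt_gt_0_iff order_le_neq_trans zero_le_power2)
    ultimately show ?thesis unfolding c_def using \<mu>0 by (simp add: abs_div_pos)
  qed
  have intc: "integrable M c"
  proof (rule Bochner_Integration.integrable_bound[where f="\<lambda>_. 1::real"])
    show "integrable M (\<lambda>_. 1::real)" by simp
    show "c \<in> borel_measurable M" unfolding c_def by measurable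
    show "AE x in M. norm (c x) \<le> norm (1::real)" using cb by simp
  qed
  have indep: "indep_var borel c borel (\<lambda>\<omega>. Y \<omega> - \<mu>)"
  proof -
    have r: "indep_var (PiM {Suc m} (\<lambda>_. borel)) (\<lambda>\<omega>. restrict (\<lambda>i. X i \<omega>) {Suc m})
       (PiM {1..m} (\<lambda>_. borel)) (\<lambda>\<omega>. restrict (\<lambda>i. X i \<omega>) {1..m})"
      by (rule indep_var_restrict[OF ind]) (use Suc.prems in auto)
    have m1: "(\<lambda>f. \<mu> / sqrt ((f (Suc m))^2 + \<mu>^2)) \<in> borel_measurable (PiM {Suc m} (\<lambda>_. borel))"
      by measurable
    have m2: "(\<lambda>f. sqrt (\<Sum>k=1..m. (f k)^2) - \<mu>) \<in> borel_measurable (PiM {1..m} (\<lambda>_. borel))"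
      by measurable
    have e1: "(\<lambda>f. \<mu> / sqrt ((f (Suc m))^2 + \<mu>^2)) \<circ> (\<lambda>\<omega>. restrict (\<lambda>i. X i \<omega>) {Suc m}) = c"
      unfolding c_def by (simp add: comp_def)
    have e2: "(\<lambda>f. sqrt (\<Sum>k=1..m. (f k)^2) - \<mu>) \<circ> (\<lambda>\<omega>. restrict (\<lambda>i. X i \<omega>) {1..m}) = (\<lambda>\<omega>. Y \<omega> - \<mu>)"
      unfolding Y_def comp_def
      by (intro ext arg_cong2[where f="(-)"] refl arg_cong[where f=sqrt] sum.cong) auto
    show ?thesis using indep_var_compose[OF r m1 m2] unfolding e1 e2 .
  qed
  have intY\<mu>: "integrable M (\<lambda>\<omega>. Y \<omega> - \<mu>)" using intY by simp
  have prod0: "(\<integral>\<omega>. c \<omega> * (Y \<omega> - \<mu>) \<partial>M) = 0"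
    using indep_var_lebesgue_integral[OF indep intc intY\<mu>] intY by (simp add: \<mu>_def prob_space)
  have intprod: "integrable M (\<lambda>\<omega>. c \<omega> * (Y \<omega> - \<mu>))"
    using indep_var_integrable[OF indep intc intY\<mu>] .
  have intZ: "integrable M (\<lambda>\<omega>. sqrt ((X (Suc m) \<omega>)^2 + \<mu>^2))" by (rule int_sqrt_const[OF intX])
  have intZl: "integrable M (\<lambda>\<omega>. sqrt ((X (Suc m) \<omega>)^2 + l^2))" by (rule int_sqrt_const[OF intX])
  have "lam M X (Suc m) = (\<integral>\<omega>. sqrt ((X (Suc m) \<omega>)^2 + l^2) \<partial>M)" unfolding l_def by simp
  also have "\<dots> \<le> (\<integral>\<omega>. sqrt ((X (Suc m) \<omega>)^2 + \<mu>^2) \<partial>M)"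
  proof (rule integral_mono[OF intZl intZ])
    fix \<omega>
    have "l^2 \<le> \<mu>^2" using l0 IH by (simp add: power_mono)
    then show "sqrt ((X (Suc m) \<omega>)^2 + l^2) \<le> sqrt ((X (Suc m) \<omega>)^2 + \<mu>^2)" by simp
  qed
  also have "\<dots> = (\<integral>\<omega>. sqrt ((X (Suc m) \<omega>)^2 + \<mu>^2) + c \<omega> * (Y \<omega> - \<mu>) \<partial>M)"
    using intZ intprod prod0 by simp
  also have "\<dots> \<le> (\<integral>\<omega>. sqrt (\<Sum>k=1..Suc m. (X k \<omega>)^2) \<partial>M)"
  proof (rule integral_mono)
    show "integrable M (\<lambda>\<omega>. sqrt ((X (Suc m) \<omega>)^2 + \<mu>^2) + c \<omega> * (Y \<omega> - \<mu>))"
      using intZ intprod by simp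
    show "integrable M (\<lambda>\<omega>. sqrt (\<Sum>k=1..Suc m. (X k \<omega>)^2))" by (rule iY2)
    fix \<omega>
    have "sqrt ((X (Suc m) \<omega>)^2 + \<mu>^2) + c \<omega> * (Y \<omega> - \<mu>) \<le> sqrt ((X (Suc m) \<omega>)^2 + (Y \<omega>)^2)"
      unfolding c_def by (rule sqrt_convex)
    also have "\<dots> = sqrt (\<Sum>k=1..Suc m. (X k \<omega>)^2)" unfolding Y_def by (rule Y_rec[symmetric])
    finally show "sqrt ((X (Suc m) \<omega>)^2 + \<mu>^2) + c \<omega> * (Y \<omega> - \<mu>) \<le> sqrt (\<Sum>k=1..Suc m. (X k \<omega>)^2)" .
  qed
  finally show ?case .
qed

lemma upper:
  assumes int: "\<And>k. k \<in> {1..n} \<Longrightarrow> integrable M (X k)"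
  shows "(\<integral>\<omega>. sqrt (\<Sum>k=1..n. (X k \<omega>)^2) \<partial>M) \<le> 2 * lam M X n"
proof -
  define l where "l = lam M X n"
  define Y where "Y = (\<lambda>\<omega>. sqrt (\<Sum>k=1..n. (X k \<omega>)^2))"
  have intY: "integrable M Y" unfolding Y_def by (rule Y_int) (use int in auto)
  have D: "(\<integral>\<omega>. max 0 (Y \<omega> - l) \<partial>M) \<le> l"
    unfolding Y_def l_def by (rule upper_aux[OF int]) auto
  have intD: "integrable M (\<lambda>\<omega>. max 0 (Y \<omega> - l))"
    by (intro integrable_max integrable_zero Bochner_Integration.integrable_diff intY) simp
  have "(\<integral>\<omega>. Y \<omega> \<partial>M) \<le> (\<integral>\<omega>. l + max 0 (Y \<omega> - l) \<partial>M)"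
    by (rule integral_mono[OF intY]) (use intD in auto)
  also have "\<dots> = l + (\<integral>\<omega>. max 0 (Y \<omega> - l) \<partial>M)"
    using intD by (simp add: prob_space)
  finally show ?thesis using D unfolding Y_def l_def by simp
qed

end

theorem corollary6p2:
  fixes M :: "'a measure" and X :: "nat \<Rightarrow> 'a \<Rightarrow> real" and n :: nat
  assumes "prob_space M"
    and "prob_space.indep_vars M (\<lambda>_. borel) X {1..n}"
    and "\<And>k. k \<in> {1..n} \<Longrightarrow> integrable M (X k)"
  shows "lam M X n \<le> (\<integral>\<omega>. sqrt (\<Sum>k=1..n. (X k \<omega>)\<^sup>2) \<partial>M)
     \<and> (\<integral>\<omega>. sqrt (\<Sum>k=1..n. (X k \<omega>)\<^sup>2) \<partial>M) \<le> 2 * lam M X n"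
  using prob_space.lower_aux[OF assms(1) assms(2) assms(3), of n]
    prob_space.upper[OF assms(1) assms(3)] by simp

end
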